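(* Let $q\geqslant 9$ be a prime power. Then the $q$-ary Hamming code $\mathcal{H}_{2,q}$ (a $[q+1,q-1,3]_q$ MDS code) is log-concave.
   Context: The $q$-ary Hamming code $\mathcal{H}_{m,q}$ is the $\mathbb{F}_q$-linear code of length $n=(q^m-1)/(q-1)$ whose parity-check matrix has as columns one nonzero representative of each $1$-dimensional subspace of $\mathbb{F}_q^m$ (equivalently, the dual of the $q$-ary simplex code). For a linear code of length $n$, $A_i$ is the number of codewords of weight $i$; the nonzero weight distribution is the subsequence $a_0,\dots,a_N$ of $A_0,\dots,A_n$ of its nonzero values, in order; the code is log-concave if $a_i^2\geqslant a_{i-1}a_{i+1}$ for all $1\leqslant i\leqslant N-1$. *)

theory Defs
  imports Main
begin

definition nonzero_vec :: "nat \<Rightarrow> 'a::field list \<Rightarrow> bool" where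
  "nonzero_vec m v \<longleftrightarrow> length v = m \<and> (\<exists>k<m. v ! k \<noteq> 0)"

(* H (list of columns) is a parity-check matrix of the q-ary Hamming code H_{m,q}:
   its columns are nonzero vectors of F_q^m, and every 1-dimensional subspace
   (every nonzero vector up to scalar) is represented by exactly one column. *)
definition is_hamming_pcm :: "nat \<Rightarrow> 'a::{finite,field} list list \<Rightarrow> bool" where
  "is_hamming_pcm m H \<longleftrightarrow>
     (\<forall>h\<in>set H. nonzero_vec m h) \<and>
     (\<forall>v. nonzero_vec m v \<longrightarrow>
        (\<exists>!j. j < length H \<and> (\<exists>a. v = map (\<lambda>x. a * x) (H ! j))))"

definition parity_code :: "nat \<Rightarrow> 'a::field list list \<Rightarrow> 'a list set" where
  "parity_code m H = {c. length c = length H \<and>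
      (\<forall>k<m. (\<Sum>j<length H. c ! j * (H ! j) ! k) = 0)}"

definition hweight :: "'a::zero list \<Rightarrow> nat" where
  "hweight c = card {i. i < length c \<and> c ! i \<noteq> 0}"

definition weight_count :: "'a::zero list set \<Rightarrow> nat \<Rightarrow> nat" where
  "weight_count C i = card {c \<in> C. hweight c = i}"

definition nonzero_weight_distr :: "nat \<Rightarrow> 'a::zero list set \<Rightarrow> nat list" where
  "nonzero_weight_distr n C = filter (\<lambda>x. x \<noteq> 0) (map (weight_count C) [0..<Suc n])"

definition log_concave_code :: "nat \<Rightarrow> 'a::zero list set \<Rightarrow> bool" where
  "log_concave_code n C \<longleftrightarrow>
     (let a = nonzero_weight_distr n C in
       \<forall>i. 1 \<le> i \<and> i + 1 < length a \<longrightarrow> a ! (i - 1) * a ! (i + 1) \<le> (a ! i)^2)"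

end

theory Submission
  imports Defs "HOL-Library.FuncSet" "HOL-Library.Cardinality"
begin


lemma poly_w4:
  fixes Q :: int assumes "Q \<ge> 9"
  shows "2 * (Q - 1) * (5 * (Q - 2)) * (3 * Q - 1) + 4 * (Q - 3) * (Q - 1)^2 * (2 * Q - 1) + 4 * (Q - 3) * (4 * Q - 1)
     \<le> (Q + 2) * (Q - 1) ^ 4"
proof -
  define t where "t = Q - 9"
  have t: "t \<ge> 0" "Q = t + 9" using assms unfolding t_def by auto
  have e: "(Q + 2) * (Q - 1) ^ 4 - (2 * (Q - 1) * (5 * (Q - 2)) * (3 * Q - 1) + 4 * (Q - 3) * (Q - 1)^2 * (2 * Q - 1) + 4 * (Q - 3) * (4 * Q - 1))
     = 3544 + 6856 * t + 2770 * t^2 + 462 * t^3 + 35 * t^4 + t^5"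
    unfolding t(2) by (simp add: algebra_simps power2_eq_square power3_eq_cube power4_eq_xxxx power_def eval_nat_numeral)
  have "0 \<le> 3544 + 6856 * t + 2770 * t^2 + 462 * t^3 + 35 * t^4 + t^5" using t by simp
  then show ?thesis using e by linarith
qed

lemma pow6:
  fixes x :: int assumes "x \<ge> 8"
  shows "72 * (x + 1) ^ 3 \<le> x ^ 6"
proof -
  define t where "t = x - 8"
  have t: "t \<ge> 0" "x = t + 8" using assms unfolding t_def by auto
  have e: "x ^ 6 - 72 * (x + 1) ^ 3 = 209656 + 179112 * t + 59496 * t^2 + 10168 * t^3 + 960 * t^4 + 48 * t^5 + t^6"
    unfolding t(2) by (simp add: algebra_simps power_def eval_nat_numeral)
  have "0 \<le> 209656 + 179112 * t + 59496 * t^2 + 10168 * t^3 + 960 * t^4 + 48 * t^5 + t^6" using t by simp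
  then show ?thesis using e by linarith
qed

lemma powbound:
  fixes Q :: int assumes Q: "Q \<ge> 9" and w: "w \<ge> 6"
  shows "2 * int w ^ 2 * Q ^ 3 \<le> (Q - 1) ^ w"
  using w
proof (induction w rule: dec_induct)
  case base
  have "72 * Q ^ 3 \<le> (Q - 1) ^ 6" using pow6[of "Q - 1"] Q by simp
  then show ?case by simp
next
  case (step v)
  have "int v * int v \<ge> 6 * int v" using step(1) by (intro mult_right_mono) auto
  moreover have "int (Suc v) ^ 2 = int v * int v + 2 * int v + 1" by (simp add: power2_eq_square algebra_simps)
  moreover have "8 * int v ^ 2 = 8 * (int v * int v)" by (simp add: power2_eq_square)
  ultimately have A: "int (Suc v) ^ 2 \<le> 8 * int v ^ 2" using step(1) by linarith
  have "2 * int (Suc v) ^ 2 * Q ^ 3 = int (Suc v) ^ 2 * (2 * Q ^ 3)" by simp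
  also have "\<dots> \<le> (8 * int v ^ 2) * (2 * Q ^ 3)" by (rule mult_right_mono[OF A]) (use Q in simp)
  also have "\<dots> = 8 * (2 * int v ^ 2 * Q ^ 3)" by simp
  also have "\<dots> \<le> (Q - 1) * (Q - 1) ^ v"
    by (rule mult_mono) (use Q step in auto)
  finally show ?case by simp
qed


lemma key_big:
  fixes Q W :: int
  assumes Q: "Q \<ge> 9" and W: "W \<ge> 6" "W \<le> Q" and P: "2 * W ^ 2 * Q ^ 3 \<le> X"
  shows "2 * (Q - 1) * ((W + 1) * (Q + 2 - W)) * ((W - 1) * Q - 1)
       + W * (Q + 1 - W) * (Q - 1)^2 * ((W - 2) * Q - 1) + W * (Q + 1 - W) * (W * Q - 1)
     \<le> (Q + 2) * X"
proof -
  have R: "0 \<le> W * (Q + 1 - W)" "W * (Q + 1 - W) \<le> W * Q" using Q W by (auto intro: mult_left_mono)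
  have R': "0 \<le> (W + 1) * (Q + 2 - W)" "(W + 1) * (Q + 2 - W) \<le> 2 * W * Q"
  proof -
    show "0 \<le> (W + 1) * (Q + 2 - W)" using W by simp
    have "(W + 1) * (Q + 2 - W) \<le> (2 * W) * Q" by (rule mult_mono) (use Q W in auto)
    then show "(W + 1) * (Q + 2 - W) \<le> 2 * W * Q" by simp
  qed
  have QW: "Q * 6 \<le> Q * W" using Q W by (intro mult_left_mono) auto
  have e1: "(W - 1) * Q - 1 = Q * W - Q - 1" "(W - 2) * Q - 1 = Q * W - 2 * Q - 1" "W * Q = Q * W"
    "2 * W * Q = 2 * (Q * W)" by (simp_all add: algebra_simps)
  have f: "0 \<le> (W - 1) * Q - 1" "(W - 1) * Q - 1 \<le> W * Q" unfolding e1 using Q QW by linarith+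
  have f1: "0 \<le> (W - 2) * Q - 1" "(W - 2) * Q - 1 \<le> W * Q" unfolding e1 using Q QW by linarith+
  have f2: "0 \<le> W * Q - 1" "W * Q - 1 \<le> 2 * W * Q" unfolding e1 using Q QW by linarith+
  have x: "0 \<le> Q - 1" "Q - 1 \<le> Q" using Q by auto
  have x2: "0 \<le> (Q - 1)^2" "(Q - 1)^2 \<le> Q^2" using x by (auto intro: power_mono)
  have WQ: "0 \<le> W * Q" using Q W by simp
  have m1: "2 * (Q - 1) * ((W + 1) * (Q + 2 - W)) \<le> 2 * Q * (2 * W * Q)"
    by (rule mult_mono) (use x R' Q in auto)
  have t1: "2 * (Q - 1) * ((W + 1) * (Q + 2 - W)) * ((W - 1) * Q - 1) \<le> 2 * Q * (2 * W * Q) * (W * Q)"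
    by (rule mult_mono[OF m1]) (use f Q W in auto)
  have m2: "W * (Q + 1 - W) * (Q - 1)^2 \<le> (W * Q) * Q^2"
    by (rule mult_mono) (use R x2 WQ in auto)
  have t2: "W * (Q + 1 - W) * (Q - 1)^2 * ((W - 2) * Q - 1) \<le> (W * Q) * Q^2 * (W * Q)"
    by (rule mult_mono[OF m2]) (use f1 WQ in auto)
  have t3: "W * (Q + 1 - W) * (W * Q - 1) \<le> (W * Q) * (2 * W * Q)"
    by (rule mult_mono) (use R f2 WQ in auto)
  have s: "2 * Q * (2 * W * Q) * (W * Q) + (W * Q) * Q^2 * (W * Q) + (W * Q) * (2 * W * Q)
      = W^2 * Q^2 * (4 * Q + Q^2 + 2)" by (simp add: algebra_simps power2_eq_square)
  have "4 * Q + Q^2 + 2 \<le> 2 * Q^2"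
  proof -
    have "9 * Q \<le> Q * Q" using Q by (intro mult_right_mono) auto
    then show ?thesis using Q unfolding power2_eq_square by linarith
  qed
  then have "W^2 * Q^2 * (4 * Q + Q^2 + 2) \<le> W^2 * Q^2 * (2 * Q^2)" by (intro mult_left_mono) auto
  also have "\<dots> = Q * (2 * W ^ 2 * Q ^ 3)" by (simp add: algebra_simps power2_eq_square power3_eq_cube)
  also have "\<dots> \<le> Q * X" using P Q by (intro mult_left_mono) auto
  also have "\<dots> \<le> (Q + 2) * X"
  proof -
    have "0 \<le> 2 * W ^ 2 * Q ^ 3" using Q by simp
    then have "0 \<le> X" using P by linarith
    then show ?thesis by (intro mult_right_mono) auto
  qed
  finally show ?thesis using t1 t2 t3 s by linarith
qed

lemma key:
  fixes Q :: int
  assumes Q: "Q \<ge> 9" and w: "w = 4 \<or> w \<ge> 6" "int w \<le> Q"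
  shows "2 * (Q - 1) * ((int w + 1) * (Q + 2 - int w)) * ((int w - 1) * Q - 1)
       + int w * (Q + 1 - int w) * (Q - 1)^2 * ((int w - 2) * Q - 1) + int w * (Q + 1 - int w) * (int w * Q - 1)
     \<le> (Q + 2) * (Q - 1) ^ w"
proof (cases "w = 4")
  case True
  then show ?thesis using poly_w4[OF Q] by (simp add: algebra_simps)
next
  case False
  then have "w \<ge> 6" using w by auto
  then show ?thesis using key_big[OF Q _ w(2) powbound[OF Q]] by simp
qed


lemma even_core:
  fixes x P f1 R Q :: int
  assumes x: "x \<ge> 0" and P: "P \<ge> 0" and R: "R \<ge> 0" and Q: "Q \<ge> 0"
    and K: "2 * x * (R + Q + 2) * (f1 + Q) + R * x^2 * f1 + R * (f1 + 2 * Q) \<le> (Q + 2) * (x * P)"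
  shows "R * ((P + x * f1) * (x^2 * P + x * (f1 + 2 * Q))) \<le> (R + Q + 2) * (x * P - x * (f1 + Q))^2"
proof -
  have id: "(R + Q + 2) * (x * P - x * (f1 + Q))^2 - R * ((P + x * f1) * (x^2 * P + x * (f1 + 2 * Q)))
     = (x * P) * ((Q + 2) * (x * P) - (2 * x * (R + Q + 2) * (f1 + Q) + R * x^2 * f1 + R * (f1 + 2 * Q)))
       + x^2 * (R * Q^2 + (Q + 2) * (f1 + Q)^2)"
    by (simp add: algebra_simps power2_eq_square)
  have "0 \<le> (x * P) * ((Q + 2) * (x * P) - (2 * x * (R + Q + 2) * (f1 + Q) + R * x^2 * f1 + R * (f1 + 2 * Q)))"
    using x P K by simp
  moreover have "0 \<le> x^2 * (R * Q^2 + (Q + 2) * (f1 + Q)^2)" using R Q by simp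
  ultimately show ?thesis using id by linarith
qed

lemma odd_core:
  fixes x P f1 R R' Q :: int
  assumes x: "x \<ge> 0" and P: "P \<ge> 0" and R: "R \<ge> 0" "R \<le> R'" and f1: "f1 \<ge> 0" and Q: "Q \<ge> 0"
  shows "R * ((P - x * f1) * (x^2 * P - x * (f1 + 2 * Q))) \<le> R' * (x * P + x * (f1 + Q))^2"
proof -
  have id: "(x * P + x * (f1 + Q))^2 - (P - x * f1) * (x^2 * P - x * (f1 + 2 * Q))
     = 2 * x^2 * P * (f1 + Q) + x * P * (f1 + 2 * Q) + x^3 * P * f1 + x^2 * Q^2"
    by (simp add: algebra_simps power2_eq_square power3_eq_cube)
  have "0 \<le> 2 * x^2 * P * (f1 + Q) + x * P * (f1 + 2 * Q) + x^3 * P * f1 + x^2 * Q^2"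
    using x P f1 Q by simp
  then have A: "(P - x * f1) * (x^2 * P - x * (f1 + 2 * Q)) \<le> (x * P + x * (f1 + Q))^2" using id by linarith
  have "R * ((P - x * f1) * (x^2 * P - x * (f1 + 2 * Q))) \<le> R * (x * P + x * (f1 + Q))^2"
    by (rule mult_left_mono[OF A R(1)])
  also have "\<dots> \<le> R' * (x * P + x * (f1 + Q))^2"
    by (rule mult_right_mono[OF R(2)]) simp
  finally show ?thesis .
qed

definition Ef :: "int \<Rightarrow> nat \<Rightarrow> int" where
  "Ef Q w = (Q - 1) ^ w + (-1) ^ w * (Q - 1) * (Q + 1 - int w * Q)"

lemma core:
  fixes Q :: int
  assumes Q: "Q \<ge> 9" and w: "w \<ge> 4" "int w \<le> Q"
  shows "int w * (Q + 1 - int w) * (Ef Q (w - 1) * Ef Q (w + 1)) \<le> (int w + 1) * (Q + 2 - int w) * (Ef Q w)^2"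
proof -
  define v where "v = w - 1"
  have wv: "w = Suc v" using w unfolding v_def by simp
  define x where "x = Q - 1"
  define P where "P = x ^ v"
  define f1 where "f1 = (int w - 2) * Q - 1"
  define R where "R = int w * (Q + 1 - int w)"
  have R'eq: "(int w + 1) * (Q + 2 - int w) = R + Q + 2" unfolding R_def by (simp add: algebra_simps)
  have x0: "x \<ge> 0" and P0: "P \<ge> 0" using Q unfolding x_def P_def by auto
  have R0: "R \<ge> 0" unfolding R_def using w by simp
  have f10: "f1 \<ge> 0"
  proof -
    have "Q * 2 \<le> Q * (int w - 2)" using Q w by (intro mult_left_mono) auto
    moreover have "Q * (int w - 2) = (int w - 2) * Q" by (simp add: algebra_simps)
    ultimately show ?thesis unfolding f1_def using Q by linarith
  qed
  have e1: "Ef Q (w - 1) = P - (-1) ^ v * x * f1"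
    unfolding Ef_def P_def x_def f1_def v_def using w by (simp add: algebra_simps of_nat_diff)
  have e2: "Ef Q w = x * P + (-1) ^ v * x * (f1 + Q)"
    unfolding Ef_def P_def x_def f1_def wv by (simp add: algebra_simps)
  have e3: "Ef Q (w + 1) = x^2 * P - (-1) ^ v * x * (f1 + 2 * Q)"
    unfolding Ef_def P_def x_def f1_def wv by (simp add: algebra_simps power2_eq_square)
  show ?thesis
  proof (cases "even v")
    case True
    then have s: "(-1::int) ^ v = 1" by simp
    have "R * ((P - x * f1) * (x^2 * P - x * (f1 + 2 * Q))) \<le> (R + Q + 2) * (x * P + x * (f1 + Q))^2"
      by (rule odd_core[OF x0 P0 R0 _ f10]) (use Q in auto)
    then show ?thesis unfolding e1 e2 e3 s R'eq R_def[symmetric] by simp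
  next
    case False
    then have s: "(-1::int) ^ v = -1" by simp
    have K: "2 * x * (R + Q + 2) * (f1 + Q) + R * x^2 * f1 + R * (f1 + 2 * Q) \<le> (Q + 2) * (x * P)"
    proof -
      have "w \<noteq> 5" using False wv by auto
      then have ww: "w = 4 \<or> w \<ge> 6" using w by auto
      have "x * P = (Q - 1) ^ w" unfolding x_def P_def wv by simp
      moreover have "f1 + Q = (int w - 1) * Q - 1" "f1 + 2 * Q = int w * Q - 1" unfolding f1_def by (simp_all add: algebra_simps)
      ultimately show ?thesis using key[OF Q ww w(2)] unfolding R'eq[symmetric] R_def x_def f1_def
        by (simp add: algebra_simps)
    qed
    have "R * ((P + x * f1) * (x^2 * P + x * (f1 + 2 * Q))) \<le> (R + Q + 2) * (x * P - x * (f1 + Q))^2"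
      by (rule even_core[OF x0 P0 R0 _ K]) (use Q in auto)
    then show ?thesis unfolding e1 e2 e3 s R'eq R_def[symmetric] by simp
  qed
qed


lemma binom_step: "Suc k * (n choose Suc k) = (n - k) * (n choose k)"
  using binomial_absorption[of k n] binomial_absorb_comp[of n k] by simp

lemma pow_gt:
  fixes Q :: int assumes Q: "Q \<ge> 9" and k: "k \<ge> 2"
  shows "int k * Q < (Q - 1) ^ k"
  using k
proof (induction k rule: dec_induct)
  case base
  have "9 * Q \<le> Q * Q" using Q by (intro mult_right_mono) auto
  moreover have "(Q - 1) ^ 2 = Q * Q - 2 * Q + 1" by (simp add: power2_eq_square algebra_simps)
  ultimately show ?case using Q by simp
next
  case (step k)
  have "int (Suc k) * Q \<le> (Q - 1) * (int k * Q)"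
  proof -
    have "int k * Q * 8 \<le> int k * Q * (Q - 1)" using Q by (intro mult_left_mono) auto
    moreover have "Q \<le> int k * Q" using step(1) Q by simp
    moreover have "int (Suc k) * Q = int k * Q + Q" by (simp add: algebra_simps)
    moreover have "(Q - 1) * (int k * Q) = int k * Q * (Q - 1)" by (simp add: algebra_simps)
    ultimately show ?thesis using Q by linarith
  qed
  also have "\<dots> < (Q - 1) * (Q - 1) ^ k" using step Q by (intro mult_strict_left_mono) auto
  finally show ?case by simp
qed

lemma Ef_pos:
  fixes Q :: int assumes Q: "Q \<ge> 9" and w: "w \<ge> 3"
  shows "Ef Q w > 0"
proof -
  define v where "v = w - 1"
  have wv: "w = Suc v" and v2: "v \<ge> 2" using w unfolding v_def by auto
  define f where "f = int v * Q - 1"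
  have f0: "f \<ge> 0" using Q v2 unfolding f_def by (simp add: order_trans[OF _ mult_right_mono[of 1 "int v" Q]])
  have gt: "f < (Q - 1) ^ v" using pow_gt[OF Q v2] unfolding f_def by simp
  have E: "Ef Q w = (Q - 1) * (Q - 1) ^ v - (-1) ^ w * (Q - 1) * f"
    unfolding Ef_def wv f_def by (simp add: algebra_simps)
  have "(-1) ^ w * (Q - 1) * f \<le> (Q - 1) * f"
  proof (cases "even w")
    case True then show ?thesis by simp
  next
    case False
    have "0 \<le> (Q - 1) * f" using Q f0 by simp
    moreover have "(-1) ^ w * (Q - 1) * f = - ((Q - 1) * f)" using False by (simp add: algebra_simps)
    ultimately show ?thesis by linarith
  qed
  moreover have "(Q - 1) * f < (Q - 1) * (Q - 1) ^ v" using gt Q by (intro mult_strict_left_mono) auto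
  ultimately show ?thesis unfolding E by linarith
qed


lemma lc_w:
  fixes A :: "nat \<Rightarrow> nat" and q w :: nat
  assumes q: "q \<ge> 9" and AE: "\<And>w. int q ^ 2 * int (A w) = int ((q + 1) choose w) * Ef (int q) w"
    and w: "4 \<le> w" "w \<le> q"
  shows "A (w - 1) * A (w + 1) \<le> A w ^ 2"
proof -
  define Q where "Q = int q"
  define n where "n = q + 1"
  define c0 where "c0 = int (n choose (w - 1))"
  define c where "c = int (n choose w)"
  define c2 where "c2 = int (n choose (w + 1))"
  define W where "W = int w"
  have Q9: "Q \<ge> 9" using q unfolding Q_def by simp
  have b1: "W * c = (Q + 2 - W) * c0"
  proof -
    have "Suc (w - 1) * (n choose Suc (w - 1)) = (n - (w - 1)) * (n choose (w - 1))" by (rule binom_step)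
    moreover have "Suc (w - 1) = w" using w by simp
    ultimately have "int (w * (n choose w)) = int ((n - (w - 1)) * (n choose (w - 1)))" by simp
    then have "W * c = int (n - (w - 1)) * c0" unfolding of_nat_mult c0_def c_def W_def by simp
    moreover have "int (n - (w - 1)) = Q + 2 - W" unfolding n_def Q_def W_def using w by (simp add: of_nat_diff)
    ultimately show ?thesis by simp
  qed
  have b2: "(W + 1) * c2 = (Q + 1 - W) * c"
  proof -
    have "Suc w * (n choose Suc w) = (n - w) * (n choose w)" by (rule binom_step)
    then have "int (Suc w * (n choose Suc w)) = int ((n - w) * (n choose w))" by (rule arg_cong)
    then have "(W + 1) * c2 = int (n - w) * c" unfolding of_nat_mult c2_def c_def W_def by (simp add: ac_simps)
    moreover have "int (n - w) = Q + 1 - W" unfolding n_def Q_def W_def using w by (simp add: of_nat_diff)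
    ultimately show ?thesis by simp
  qed
  have core': "W * (Q + 1 - W) * (Ef Q (w - 1) * Ef Q (w + 1)) \<le> (W + 1) * (Q + 2 - W) * (Ef Q w)^2"
    unfolding W_def using core[OF Q9 w(1)] w unfolding Q_def by simp
  define D where "D = (Q + 2 - W) * (W + 1)"
  have D0: "D > 0" unfolding D_def W_def Q_def using w by simp
  have "D * (c0 * c2 * (Ef Q (w - 1) * Ef Q (w + 1))) = ((Q + 2 - W) * c0) * ((W + 1) * c2) * (Ef Q (w - 1) * Ef Q (w + 1))"
    unfolding D_def by (simp add: algebra_simps)
  also have "\<dots> = c^2 * (W * (Q + 1 - W) * (Ef Q (w - 1) * Ef Q (w + 1)))"
    unfolding b1[symmetric] b2 by (simp add: algebra_simps power2_eq_square)
  also have "\<dots> \<le> c^2 * ((W + 1) * (Q + 2 - W) * (Ef Q w)^2)"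
    by (rule mult_left_mono[OF core']) simp
  also have "\<dots> = D * (c^2 * (Ef Q w)^2)" unfolding D_def by (simp add: algebra_simps)
  finally have "c0 * c2 * (Ef Q (w - 1) * Ef Q (w + 1)) \<le> c^2 * (Ef Q w)^2" using D0 by simp
  moreover have "Q^4 * int (A (w - 1) * A (w + 1)) = c0 * c2 * (Ef Q (w - 1) * Ef Q (w + 1))"
  proof -
    have "Q^4 * int (A (w - 1) * A (w + 1)) = (Q^2 * int (A (w - 1))) * (Q^2 * int (A (w + 1)))"
      by (simp add: algebra_simps power_def eval_nat_numeral)
    also have "\<dots> = c0 * c2 * (Ef Q (w - 1) * Ef Q (w + 1))"
      unfolding Q_def AE c0_def c2_def n_def by (simp add: algebra_simps)
    finally show ?thesis .
  qed
  moreover have "Q^4 * int (A w ^ 2) = c^2 * (Ef Q w)^2"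
  proof -
    have "Q^4 * int (A w ^ 2) = (Q^2 * int (A w))^2"
      by (simp add: algebra_simps power_def eval_nat_numeral)
    also have "\<dots> = c^2 * (Ef Q w)^2"
      unfolding Q_def AE c_def n_def by (simp add: algebra_simps power2_eq_square)
    finally show ?thesis .
  qed
  ultimately have "Q^4 * int (A (w - 1) * A (w + 1)) \<le> Q^4 * int (A w ^ 2)" by simp
  then have "int (A (w - 1) * A (w + 1)) \<le> int (A w ^ 2)" using Q9 by simp
  then show ?thesis by linarith
qed


lemma lc_3:
  fixes A :: "nat \<Rightarrow> nat" and q :: nat
  assumes q: "q \<ge> 9" and AE: "\<And>w. int q ^ 2 * int (A w) = int ((q + 1) choose w) * Ef (int q) w"
  shows "A 4 \<le> A 3 ^ 2"
proof -
  define Q where "Q = int q"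
  define n where "n = q + 1"
  define c3 where "c3 = int (n choose 3)"
  define c4 where "c4 = int (n choose 4)"
  have Q9: "Q \<ge> 9" using q unfolding Q_def by simp
  have E3: "Ef Q 3 = Q^2 * (Q - 1)" unfolding Ef_def by (simp add: algebra_simps power2_eq_square power3_eq_cube)
  have E4: "Ef Q 4 = Q^2 * ((Q - 1) * (Q - 3))" unfolding Ef_def by (simp add: algebra_simps power2_eq_square power3_eq_cube power4_eq_xxxx)
  have A3: "int (A 3) = c3 * (Q - 1)"
  proof -
    have "Q^2 * int (A 3) = Q^2 * (c3 * (Q - 1))" using AE[of 3] unfolding E3 c3_def n_def Q_def[symmetric] by (simp add: algebra_simps)
    then show ?thesis using Q9 by simp
  qed
  have A4: "int (A 4) = c4 * ((Q - 1) * (Q - 3))"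
  proof -
    have "Q^2 * int (A 4) = Q^2 * (c4 * ((Q - 1) * (Q - 3)))" using AE[of 4] unfolding E4 c4_def n_def Q_def[symmetric] by (simp add: algebra_simps)
    then show ?thesis using Q9 by simp
  qed
  have b3: "4 * c4 = (Q - 2) * c3"
  proof -
    have "Suc 3 * (n choose Suc 3) = (n - 3) * (n choose 3)" by (rule binom_step)
    then have "int (Suc 3 * (n choose Suc 3)) = int ((n - 3) * (n choose 3))" by (rule arg_cong)
    then have "4 * c4 = int (n - 3) * c3" unfolding of_nat_mult c3_def c4_def by (simp add: eval_nat_numeral)
    moreover have "int (n - 3) = Q - 2" unfolding n_def Q_def using q by (simp add: of_nat_diff)
    ultimately show ?thesis by simp
  qed
  have c3Q: "c3 \<ge> Q"
  proof -
    have e2: "Suc 2 * (n choose Suc 2) = (n - 2) * (n choose 2)" by (rule binom_step)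
    have e1: "Suc 1 * (n choose Suc 1) = (n - 1) * (n choose 1)" by (rule binom_step)
    have "6 * (n choose 3) = (n - 2) * ((n - 1) * n)"
    proof -
      have "6 * (n choose 3) = 2 * (3 * (n choose 3))" by simp
      also have "3 * (n choose 3) = (n - 2) * (n choose 2)" using e2 by (simp add: eval_nat_numeral)
      also have "2 * ((n - 2) * (n choose 2)) = (n - 2) * (2 * (n choose 2))" by simp
      also have "2 * (n choose 2) = (n - 1) * n" using e1 by (simp add: eval_nat_numeral)
      finally show ?thesis .
    qed
    then have "int (6 * (n choose 3)) = int ((n - 2) * ((n - 1) * n))" by (rule arg_cong)
    then have "6 * c3 = int (n - 2) * (int (n - 1) * int n)" unfolding c3_def of_nat_mult by simp
    moreover have "int (n - 2) = Q - 1" "int (n - 1) = Q" "int n = Q + 1" unfolding n_def Q_def using q by (simp_all add: of_nat_diff)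
    ultimately have e: "6 * c3 = (Q - 1) * (Q * (Q + 1))" by simp
    have "6 * Q \<le> (Q - 1) * (Q * (Q + 1))"
    proof -
      have "9 * 9 \<le> Q * Q" using Q9 by (intro mult_mono) auto
      moreover have "(Q - 1) * (Q + 1) = Q * Q - 1" by (simp add: algebra_simps)
      ultimately have "6 \<le> (Q - 1) * (Q + 1)" by linarith
      then have "Q * 6 \<le> Q * ((Q - 1) * (Q + 1))" using Q9 by (intro mult_left_mono) auto
      then show ?thesis by (simp add: algebra_simps)
    qed
    then show ?thesis using e by linarith
  qed
  have "4 * int (A 4) = (4 * c4) * ((Q - 1) * (Q - 3))" unfolding A4 by simp
  also have "\<dots> = c3 * (Q - 1) * ((Q - 2) * (Q - 3))" unfolding b3 by (simp add: algebra_simps)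
  finally have "4 * int (A 4) = c3 * (Q - 1) * ((Q - 2) * (Q - 3))" .
  also have "\<dots> \<le> c3 * (Q - 1) * (4 * (c3 * (Q - 1)))"
  proof (rule mult_left_mono)
    have s1: "9 * 9 \<le> Q * Q" using Q9 by (intro mult_mono) auto
    have s2: "4 * (Q * (Q - 1)) - (Q - 2) * (Q - 3) = 3 * (Q * Q) + Q - 6" by (simp add: algebra_simps)
    have s4: "(Q - 2) * (Q - 3) \<le> 4 * (Q * (Q - 1))" using Q9 s1 s2 by linarith
    have s5: "4 * (Q * (Q - 1)) \<le> 4 * (c3 * (Q - 1))" using c3Q Q9 by (intro mult_left_mono mult_right_mono) auto
    show "(Q - 2) * (Q - 3) \<le> 4 * (c3 * (Q - 1))" using s4 s5 by linarith
    show "0 \<le> c3 * (Q - 1)" using c3Q Q9 by simp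
  qed
  also have "\<dots> = 4 * int (A 3 ^ 2)" unfolding of_nat_power A3 by (simp add: power2_eq_square algebra_simps)
  finally show ?thesis by simp
qed


lemma final_arith:
  fixes A :: "nat \<Rightarrow> nat" and q :: nat
  assumes q: "q \<ge> 9" and AE: "\<And>w. int q ^ 2 * int (A w) = int ((q + 1) choose w) * Ef (int q) w"
  shows "let a = filter (\<lambda>x. x \<noteq> 0) (map A [0..<Suc (q + 1)]) in
           \<forall>i. 1 \<le> i \<and> i + 1 < length a \<longrightarrow> a ! (i - 1) * a ! (i + 1) \<le> (a ! i)^2"
proof -
  define Q where "Q = int q"
  have Q9: "Q \<ge> 9" using q unfolding Q_def by simp
  have A0: "A 0 = 1"
  proof -
    have "Ef Q 0 = Q^2" unfolding Ef_def by (simp add: algebra_simps power2_eq_square)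
    then have "Q^2 * int (A 0) = Q^2 * 1" using AE[of 0] unfolding Q_def by simp
    then show ?thesis using Q9 by simp
  qed
  have A1: "A 1 = 0"
  proof -
    have "Ef Q 1 = 0" unfolding Ef_def by (simp add: algebra_simps)
    then have "Q^2 * int (A 1) = 0" using AE[of 1] unfolding Q_def by simp
    then show ?thesis using Q9 by simp
  qed
  have A2: "A 2 = 0"
  proof -
    have "Ef Q 2 = 0" unfolding Ef_def by (simp add: algebra_simps power2_eq_square)
    then have "Q^2 * int (A 2) = 0" using AE[of 2] unfolding Q_def by simp
    then show ?thesis using Q9 by simp
  qed
  have Apos: "A w \<noteq> 0" if "3 \<le> w" "w \<le> q + 1" for w
  proof -
    have "Ef Q w > 0" using Ef_pos[OF Q9 that(1)] .
    moreover have "int ((q + 1) choose w) > 0" using that by simp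
    ultimately have "Q^2 * int (A w) > 0" using AE[of w] unfolding Q_def by simp
    then show ?thesis by (cases "A w = 0") auto
  qed
  have up: "[0..<Suc (q + 1)] = [0, 1, 2] @ [3..<Suc (q + 1)]"
  proof -
    have e: "Suc (q + 1) = 3 + (q - 1)" using q by simp
    have "[0..<Suc (q + 1)] = [0..<3] @ [3..<Suc (q + 1)]" unfolding e by (rule upt_add_eq_append) simp
    also have "[0..<3] = [0, 1, (2::nat)]" by (simp add: upt_rec)
    finally show ?thesis .
  qed
  have ft: "filter (\<lambda>x. x \<noteq> 0) (map A [3..<Suc (q + 1)]) = map A [3..<Suc (q + 1)]"
  proof (rule filter_True, rule ballI)
    fix x assume "x \<in> set (map A [3..<Suc (q + 1)])"
    then obtain w where "x = A w" "3 \<le> w" "w \<le> q + 1" by auto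
    then show "x \<noteq> 0" using Apos by simp
  qed
  define a where "a = filter (\<lambda>x. x \<noteq> 0) (map A [0..<Suc (q + 1)])"
  have a: "a = 1 # map A [3..<Suc (q + 1)]" unfolding a_def up using A0 A1 A2 ft by simp
  have la: "length a = q" unfolding a using q by simp
  have an: "a ! j = A (j + 2)" if "1 \<le> j" "j < q" for j
  proof -
    define k where "k = j - 1"
    have k: "j = Suc k" using that(1) unfolding k_def by simp
    have "a ! j = map A [3..<Suc (q + 1)] ! k" unfolding a k by simp
    also have "\<dots> = A (3 + k)" using that k by (intro nth_map_upt) auto
    also have "3 + k = j + 2" using k by simp
    finally show ?thesis .
  qed
  have "\<forall>i. 1 \<le> i \<and> i + 1 < length a \<longrightarrow> a ! (i - 1) * a ! (i + 1) \<le> (a ! i)^2"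
  proof (intro allI impI)
    fix i assume i: "1 \<le> i \<and> i + 1 < length a"
    show "a ! (i - 1) * a ! (i + 1) \<le> (a ! i)^2"
    proof (cases "i = 1")
      case True
      have "a ! 0 = 1" unfolding a by simp
      moreover have "a ! 2 = A 4" using an[of 2] q by (simp add: eval_nat_numeral)
      moreover have "a ! 1 = A 3" using an[of 1] q by (simp add: eval_nat_numeral)
      ultimately show ?thesis using True lc_3[OF q AE] by (simp add: numeral_2_eq_2)
    next
      case False
      have i1: "1 \<le> i - 1" "i - 1 < q" using i la False by auto
      have "a ! (i - 1) = A (i - 1 + 2)" by (rule an[OF i1])
      moreover have "i - 1 + 2 = i + 2 - 1" using i by simp
      ultimately have "a ! (i - 1) = A (i + 2 - 1)" by simp
      moreover have "a ! (i + 1) = A (i + 2 + 1)" using an[of "i + 1"] i la by simp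
      moreover have "a ! i = A (i + 2)" using an[of i] i la by simp
      moreover have "A (i + 2 - 1) * A (i + 2 + 1) \<le> A (i + 2) ^ 2"
        by (rule lc_w[OF q AE]) (use i la False in auto)
      ultimately show ?thesis by simp
    qed
  qed
  then show ?thesis unfolding a_def Let_def .
qed


primrec Zp :: "nat \<Rightarrow> nat \<Rightarrow> nat \<times> nat" where
  "Zp q 0 = (1, 0)"
| "Zp q (Suc m) = ((q - 1) * snd (Zp q m), fst (Zp q m) + (q - 2) * snd (Zp q m))"

definition G :: "nat set \<Rightarrow> (nat \<Rightarrow> 'a::{finite,field}) \<Rightarrow> 'a \<Rightarrow> nat" where
  "G S \<alpha> t = card {f \<in> Pi\<^sub>E S (\<lambda>_. UNIV - {0}). (\<Sum>j\<in>S. f j * \<alpha> j) = t}"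

lemma sum_nonzero_shift:
  fixes g :: "'a::{finite,field} \<Rightarrow> nat" and c :: 'a
  assumes "c \<noteq> 0" and "\<And>s. s \<noteq> 0 \<Longrightarrow> g s = B"
  shows "(\<Sum>y\<in>UNIV - {0}. g (t - y * c)) =
     (if t = 0 then (CARD('a) - 1) * B else g 0 + (CARD('a) - 2) * B)"
proof (cases "t = 0")
  case True
  have "(\<Sum>y\<in>UNIV - {0}. g (t - y * c)) = (\<Sum>y\<in>UNIV - {0::'a}. B)"
    by (rule sum.cong) (auto simp: True assms)
  also have "\<dots> = (CARD('a) - 1) * B" by (simp add: card_Diff_singleton)
  finally show ?thesis using True by simp
next
  case False
  let ?y0 = "t / c"
  have y0: "?y0 \<in> UNIV - {0}" using False assms by auto
  have "(\<Sum>y\<in>UNIV - {0}. g (t - y * c)) = g (t - ?y0 * c) + (\<Sum>y\<in>UNIV - {0} - {?y0}. g (t - y * c))"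
    by (rule sum.remove) (use y0 in auto)
  also have "g (t - ?y0 * c) = g 0" using assms by simp
  also have "(\<Sum>y\<in>UNIV - {0} - {?y0}. g (t - y * c)) = (\<Sum>y\<in>UNIV - {0} - {?y0}. B)"
  proof (rule sum.cong)
    fix y assume "y \<in> UNIV - {0} - {?y0}"
    then have "t - y * c \<noteq> 0" using assms by (auto simp: field_simps)
    then show "g (t - y * c) = B" using assms by simp
  qed simp
  also have "\<dots> = (CARD('a) - 2) * B"
    using y0 by (simp add: card_Diff_singleton numeral_2_eq_2)
  finally show ?thesis using False by simp
qed

lemma G_insert:
  fixes \<alpha> :: "nat \<Rightarrow> 'a::{finite,field}"
  assumes "finite S" "k \<notin> S"
  shows "G (insert k S) \<alpha> t = (\<Sum>y\<in>UNIV - {0}. G S \<alpha> (t - y * \<alpha> k))"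
proof -
  let ?T = "\<lambda>_::nat. UNIV - {0::'a}"
  let ?F = "\<lambda>(y, g). g(k := y)"
  let ?A = "SIGMA y:UNIV - {0}. {g \<in> Pi\<^sub>E S ?T. (\<Sum>j\<in>S. g j * \<alpha> j) = t - y * \<alpha> k}"
  have "{f \<in> Pi\<^sub>E (insert k S) ?T. (\<Sum>j\<in>insert k S. f j * \<alpha> j) = t} = ?F ` ?A"
  proof (intro set_eqI iffI)
    fix f assume f: "f \<in> {f \<in> Pi\<^sub>E (insert k S) ?T. (\<Sum>j\<in>insert k S. f j * \<alpha> j) = t}"
    then have fk: "f k \<noteq> 0" by (auto simp: PiE_iff)
    let ?g = "f(k := undefined)"
    have g: "?g \<in> Pi\<^sub>E S ?T" using f assms by (auto simp: PiE_iff)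
    have "(\<Sum>j\<in>S. ?g j * \<alpha> j) = (\<Sum>j\<in>S. f j * \<alpha> j)"
      using assms by (intro sum.cong) auto
    also have "\<dots> = t - f k * \<alpha> k" using f assms by (simp add: algebra_simps)
    finally have "(f k, ?g) \<in> ?A" using g fk by auto
    moreover have "f = ?F (f k, ?g)" by simp
    ultimately show "f \<in> ?F ` ?A" by blast
  next
    fix f assume "f \<in> ?F ` ?A"
    then obtain y g where y: "y \<noteq> 0" and g: "g \<in> Pi\<^sub>E S ?T"
      and s: "(\<Sum>j\<in>S. g j * \<alpha> j) = t - y * \<alpha> k" and f: "f = g(k := y)" by auto
    have "(\<Sum>j\<in>S. f j * \<alpha> j) = (\<Sum>j\<in>S. g j * \<alpha> j)"
      using assms f by (intro sum.cong) auto
    then have "(\<Sum>j\<in>insert k S. f j * \<alpha> j) = t" using assms s f by simp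
    moreover have "f \<in> Pi\<^sub>E (insert k S) ?T" using g y f by (auto simp: PiE_iff)
    ultimately show "f \<in> {f \<in> Pi\<^sub>E (insert k S) ?T. (\<Sum>j\<in>insert k S. f j * \<alpha> j) = t}" by blast
  qed
  moreover have "inj_on ?F ?A"
    by (rule inj_on_subset[OF inj_combinator[OF assms(2), of ?T]]) auto
  ultimately have "G (insert k S) \<alpha> t = card ?A"
    unfolding G_def by (simp add: card_image)
  also have "\<dots> = (\<Sum>y\<in>UNIV - {0}. G S \<alpha> (t - y * \<alpha> k))"
  proof -
    have fin: "finite (Pi\<^sub>E S ?T)" by (rule finite_PiE) (use assms in auto)
    show ?thesis unfolding G_def by (rule card_SigmaI) (use fin in auto)
  qed
  finally show ?thesis .
qed

lemma G_formula:
  fixes \<alpha> :: "nat \<Rightarrow> 'a::{finite,field}"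
  assumes "finite S"
  shows "G S \<alpha> t = (CARD('a) - 1) ^ card {j\<in>S. \<alpha> j = 0} *
     (if t = 0 then fst (Zp CARD('a) (card {j\<in>S. \<alpha> j \<noteq> 0}))
      else snd (Zp CARD('a) (card {j\<in>S. \<alpha> j \<noteq> 0})))"
  using assms
proof (induction S arbitrary: t rule: finite_induct)
  case empty
  show ?case by (simp add: G_def)
next
  case (insert k S)
  let ?q = "CARD('a)"
  let ?z = "card {j\<in>S. \<alpha> j = 0}"
  let ?m = "card {j\<in>S. \<alpha> j \<noteq> 0}"
  have GI: "G (insert k S) \<alpha> t = (\<Sum>y\<in>UNIV - {0}. G S \<alpha> (t - y * \<alpha> k))"
    by (rule G_insert) (use insert in auto)
  show ?case
  proof (cases "\<alpha> k = 0")
    case True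
    have z: "{j\<in>insert k S. \<alpha> j = 0} = insert k {j\<in>S. \<alpha> j = 0}" using True by auto
    have m: "{j\<in>insert k S. \<alpha> j \<noteq> 0} = {j\<in>S. \<alpha> j \<noteq> 0}" using True by auto
    have "G (insert k S) \<alpha> t = (\<Sum>y\<in>UNIV - {0::'a}. G S \<alpha> t)" using GI True by simp
    also have "\<dots> = (?q - 1) * G S \<alpha> t" by (simp add: card_Diff_singleton)
    finally show ?thesis using insert z m by simp
  next
    case False
    have z: "{j\<in>insert k S. \<alpha> j = 0} = {j\<in>S. \<alpha> j = 0}" using False by auto
    have m: "{j\<in>insert k S. \<alpha> j \<noteq> 0} = insert k {j\<in>S. \<alpha> j \<noteq> 0}" using False by auto
    have cm: "card {j\<in>insert k S. \<alpha> j \<noteq> 0} = Suc ?m" using m insert by simp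
    have "G (insert k S) \<alpha> t = (if t = 0 then (?q - 1) * ((?q - 1) ^ ?z * snd (Zp ?q ?m))
        else G S \<alpha> 0 + (?q - 2) * ((?q - 1) ^ ?z * snd (Zp ?q ?m)))"
      unfolding GI by (rule sum_nonzero_shift[OF False]) (use insert in simp)
    also have "\<dots> = (?q - 1) ^ ?z * (if t = 0 then fst (Zp ?q (Suc ?m)) else snd (Zp ?q (Suc ?m)))"
      using insert by (simp add: algebra_simps)
    finally show ?thesis using z cm by simp
  qed
qed

lemma Zp_closed:
  assumes "q \<ge> 2"
  shows "int q * int (fst (Zp q m)) = (int q - 1) ^ m + (-1) ^ m * (int q - 1) \<and>
         int q * int (snd (Zp q m)) = (int q - 1) ^ m - (-1) ^ m"
proof (induction m)
  case 0
  then show ?case by simp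
next
  case (Suc m)
  have IH1: "int q * int (fst (Zp q m)) = (int q - 1) ^ m + (-1) ^ m * (int q - 1)"
   and IH2: "int q * int (snd (Zp q m)) = (int q - 1) ^ m - (-1) ^ m" using Suc by auto
  have q1: "int (q - 1) = int q - 1" and q2: "int (q - 2) = int q - 2" using assms by auto
  have "int (fst (Zp q (Suc m))) = (int q - 1) * int (snd (Zp q m))"
    by (simp only: Zp.simps fst_conv of_nat_mult q1)
  then have "int q * int (fst (Zp q (Suc m))) = (int q - 1) * (int q * int (snd (Zp q m)))"
    by (simp only:) (simp add: algebra_simps)
  also have "\<dots> = (int q - 1) ^ Suc m + (-1) ^ Suc m * (int q - 1)"
    unfolding IH2 by (simp add: algebra_simps)
  finally have A: "int q * int (fst (Zp q (Suc m))) = (int q - 1) ^ Suc m + (-1) ^ Suc m * (int q - 1)" .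
  have "int (snd (Zp q (Suc m))) = int (fst (Zp q m)) + (int q - 2) * int (snd (Zp q m))"
    by (simp only: Zp.simps snd_conv of_nat_mult of_nat_add q2)
  then have "int q * int (snd (Zp q (Suc m))) = int q * int (fst (Zp q m)) + (int q - 2) * (int q * int (snd (Zp q m)))"
    by (simp only:) (simp add: algebra_simps)
  also have "\<dots> = (int q - 1) ^ Suc m - (-1) ^ Suc m"
    unfolding IH1 IH2 by (simp add: algebra_simps)
  finally show ?case using A by simp
qed


locale ham =
  fixes H :: "'a::{finite,field} list list"
  assumes pcm: "is_hamming_pcm 2 H"
begin

definition dot :: "'a \<times> 'a \<Rightarrow> nat \<Rightarrow> 'a" where
  "dot u j = fst u * (H!j!0) + snd u * (H!j!1)"

lemma col:
  assumes "j < length H"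
  shows "H!j = [H!j!0, H!j!1]" "H!j!0 \<noteq> 0 \<or> H!j!1 \<noteq> 0"
proof -
  have "nonzero_vec 2 (H!j)" using pcm assms unfolding is_hamming_pcm_def by auto
  then have L: "length (H!j) = 2" and nz: "\<exists>k<2. H!j!k \<noteq> 0" unfolding nonzero_vec_def by auto
  show "H!j = [H!j!0, H!j!1]" using L
    by (cases "H!j"; cases "tl (H!j)") auto
  show "H!j!0 \<noteq> 0 \<or> H!j!1 \<noteq> 0" using nz by (auto simp: less_2_cases_iff)
qed

lemma perp_iff:
  assumes "j < length H"
  shows "(\<exists>c. [- snd u, fst u] = map (\<lambda>x. c*x) (H!j)) \<longleftrightarrow> dot u j = 0"
proof -
  obtain a b where ab: "H!j = [a, b]" "a \<noteq> 0 \<or> b \<noteq> 0" using col[OF assms] by metis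
  obtain u1 u2 where u: "u = (u1, u2)" by (cases u)
  have "(\<exists>c. - u2 = c * a \<and> u1 = c * b) \<longleftrightarrow> u1 * a + u2 * b = 0"
  proof
    assume "\<exists>c. - u2 = c * a \<and> u1 = c * b"
    then obtain c where c1: "- u2 = c * a" and c2: "u1 = c * b" by blast
    have "u2 = - (c * a)" using c1 by (metis minus_minus)
    then show "u1 * a + u2 * b = 0" using c2 by (simp add: algebra_simps)
  next
    assume h: "u1 * a + u2 * b = 0"
    show "\<exists>c. - u2 = c * a \<and> u1 = c * b"
    proof (cases "a = 0")
      case True
      then have "b \<noteq> 0" using ab by auto
      then show ?thesis using h True by (intro exI[of _ "u1 / b"]) auto
    next
      case False
      have h': "u1 * a = - (u2 * b)" using h by (simp add: eq_neg_iff_add_eq_0)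
      then show ?thesis using False by (intro exI[of _ "- u2 / a"]) (auto simp: field_simps)
    qed
  qed
  then show ?thesis using ab u by (simp add: dot_def)
qed

lemma uniq:
  assumes "u \<noteq> (0, 0)"
  shows "\<exists>!j. j < length H \<and> dot u j = 0"
proof -
  have nz: "nonzero_vec 2 [- snd u, fst u]" using assms
  proof -
    obtain u1 u2 where u: "u = (u1, u2)" by (cases u)
    show ?thesis
    proof (cases "u2 = 0")
      case True
      then have "u1 \<noteq> 0" using assms u by simp
      then have "[- snd u, fst u] ! 1 \<noteq> 0" using u by simp
      then show ?thesis unfolding nonzero_vec_def by (intro conjI exI[of _ 1]) auto
    next
      case False
      then have "[- snd u, fst u] ! 0 \<noteq> 0" using u by simp
      then show ?thesis unfolding nonzero_vec_def by (intro conjI exI[of _ 0]) auto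
    qed
  qed
  have P: "\<forall>v. nonzero_vec 2 v \<longrightarrow> (\<exists>!j. j < length H \<and> (\<exists>a. v = map (\<lambda>x. a * x) (H ! j)))"
    using pcm unfolding is_hamming_pcm_def by (rule conjunct2)
  have "\<exists>!j. j < length H \<and> (\<exists>c. [- snd u, fst u] = map (\<lambda>x. c*x) (H!j))"
    using P[rule_format, OF nz] .
  then obtain j where j: "j < length H \<and> (\<exists>c. [- snd u, fst u] = map (\<lambda>x. c*x) (H!j))"
    and jj: "\<forall>i. i < length H \<and> (\<exists>c. [- snd u, fst u] = map (\<lambda>x. c*x) (H!i)) \<longrightarrow> i = j"
    by (erule ex1E)
  show ?thesis
  proof (rule ex1I[of _ j])
    have jl: "j < length H" using j by (rule conjunct1)
    have "dot u j = 0" by (rule iffD1[OF perp_iff[OF jl]]) (rule conjunct2[OF j])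
    then show "j < length H \<and> dot u j = 0" using jl by (rule conjI[rotated])
    fix i assume i: "i < length H \<and> dot u i = 0"
    have il: "i < length H" using i by (rule conjunct1)
    have ex: "\<exists>c. [- snd u, fst u] = map (\<lambda>x. c*x) (H!i)" by (rule iffD2[OF perp_iff[OF il]]) (rule conjunct2[OF i])
    show "i = j" by (rule mp[OF spec[OF jj, of i] conjI[OF il ex]])
  qed
qed

lemma uniq_eq:
  assumes "u \<noteq> (0, 0)" "i < length H" "j < length H" "dot u i = 0" "dot u j = 0"
  shows "i = j"
proof -
  obtain k where "k < length H \<and> dot u k = 0" and kk: "\<forall>i. i < length H \<and> dot u i = 0 \<longrightarrow> i = k"
    by (rule ex1E[OF uniq[OF assms(1)]])
  have "i = k" using kk assms by blast
  moreover have "j = k" using kk assms by blast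
  ultimately show ?thesis by simp
qed

lemma uniq_ex:
  assumes "u \<noteq> (0, 0)"
  shows "\<exists>j<length H. dot u j = 0"
proof -
  obtain k where "k < length H \<and> dot u k = 0" and "\<forall>i. i < length H \<and> dot u i = 0 \<longrightarrow> i = k"
    by (rule ex1E[OF uniq[OF assms]])
  then show ?thesis by auto
qed

lemma line_card:
  assumes "j < length H"
  shows "card {u. u \<noteq> (0, 0) \<and> dot u j = 0} = CARD('a) - 1"
proof -
  obtain a b where ab: "H!j = [a, b]" "a \<noteq> 0 \<or> b \<noteq> 0" using col[OF assms] by metis
  have dj: "dot u j = fst u * a + snd u * b" for u using ab by (simp add: dot_def)
  let ?g = "\<lambda>c. (c * b, - c * a)"
  have "{u. u \<noteq> (0, 0) \<and> dot u j = 0} = ?g ` (UNIV - {0})"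
  proof (intro set_eqI iffI)
    fix u assume "u \<in> {u. u \<noteq> (0, 0) \<and> dot u j = 0}"
    then obtain u1 u2 where u: "u = (u1, u2)" "(u1, u2) \<noteq> (0, 0)" "u1 * a + u2 * b = 0"
      by (cases u) (auto simp: dj)
    show "u \<in> ?g ` (UNIV - {0})"
    proof (cases "a = 0")
      case True
      then have "b \<noteq> 0" using ab by auto
      then have "u2 = 0" "u1 \<noteq> 0" using u True by auto
      then show ?thesis using u True \<open>b \<noteq> 0\<close>
        by (intro image_eqI[of _ _ "u1 / b"]) auto
    next
      case False
      then have "u2 \<noteq> 0" using u by auto
      moreover have "u1 = - u2 / a * b"
      proof -
        have "u1 * a = - (u2 * b)" using u by (simp add: eq_neg_iff_add_eq_0 algebra_simps)
        then show ?thesis using False by (simp add: field_simps)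
      qed
      ultimately show ?thesis using u False
        by (intro image_eqI[of _ _ "- u2 / a"]) auto
    qed
  next
    fix u assume "u \<in> ?g ` (UNIV - {0})"
    then obtain c where "c \<noteq> 0" "u = ?g c" by auto
    then show "u \<in> {u. u \<noteq> (0, 0) \<and> dot u j = 0}" using ab by (auto simp: dj algebra_simps)
  qed
  moreover have "inj_on ?g (UNIV - {0})"
    using ab by (auto simp: inj_on_def)
  ultimately show ?thesis by (simp add: card_image card_Diff_singleton)
qed

lemma U1_card:
  assumes "S \<subseteq> {..<length H}"
  shows "card {u. u \<noteq> (0, 0) \<and> (\<exists>j\<in>S. dot u j = 0)} = card S * (CARD('a) - 1)"
proof -
  have fS: "finite S" using assms finite_subset by blast
  have "{u. u \<noteq> (0, 0) \<and> (\<exists>j\<in>S. dot u j = 0)} = (\<Union>j\<in>S. {u. u \<noteq> (0, 0) \<and> dot u j = 0})" by auto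
  also have "card \<dots> = (\<Sum>j\<in>S. card {u. u \<noteq> (0, 0) \<and> dot u j = 0})"
  proof (rule card_UN_disjoint[OF fS])
    show "\<forall>i\<in>S. \<forall>j\<in>S. i \<noteq> j \<longrightarrow> {u. u \<noteq> (0, 0) \<and> dot u i = 0} \<inter> {u. u \<noteq> (0, 0) \<and> dot u j = 0} = {}"
      using uniq_eq assms by blast
  qed auto
  also have "\<dots> = (\<Sum>j\<in>S. CARD('a) - 1)"
    using assms line_card by (intro sum.cong) auto
  finally show ?thesis by simp
qed

lemma len: "length H = CARD('a) + 1"
proof -
  have q2: "CARD('a) \<ge> 2"
  proof -
    have "card {0::'a, 1} \<le> CARD('a)" by (rule card_mono) auto
    then show ?thesis by simp
  qed
  have "{u. u \<noteq> (0::'a, 0::'a) \<and> (\<exists>j\<in>{..<length H}. dot u j = 0)} = UNIV - {(0, 0)}"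
    using uniq_ex by auto
  then have "card (UNIV - {(0::'a, 0::'a)}) = length H * (CARD('a) - 1)"
    using U1_card[of "{..<length H}"] by simp
  moreover have "card (UNIV - {(0::'a, 0::'a)}) = CARD('a) * CARD('a) - 1"
    by (simp add: card_Diff_singleton UNIV_Times_UNIV[symmetric] card_cartesian_product del: UNIV_Times_UNIV)
  ultimately have "length H * (CARD('a) - 1) = CARD('a) * CARD('a) - 1" by simp
  also have "\<dots> = (CARD('a) + 1) * (CARD('a) - 1)" using q2
    by (simp add: algebra_simps diff_mult_distrib2)
  finally have "length H * (CARD('a) - 1) = (CARD('a) + 1) * (CARD('a) - 1)" .
  moreover have "CARD('a) - 1 \<noteq> 0" using q2 by simp
  ultimately show ?thesis by (metis mult_right_cancel)
qed

end


lemma lincount: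
  fixes X Y :: "'a::{finite,field}"
  shows "card {u::'a \<times> 'a. fst u * X + snd u * Y = 0} = (if X = 0 \<and> Y = 0 then CARD('a) * CARD('a) else CARD('a))"
proof (cases "X = 0 \<and> Y = 0")
  case True
  then have "{u::'a \<times> 'a. fst u * X + snd u * Y = 0} = UNIV \<times> UNIV" by auto
  then show ?thesis using True by (simp add: card_cartesian_product del: UNIV_Times_UNIV)
next
  case False
  show ?thesis
  proof (cases "X = 0")
    case True
    then have Y: "Y \<noteq> 0" using False by auto
    have "{u::'a \<times> 'a. fst u * X + snd u * Y = 0} = (\<lambda>x. (x, 0)) ` UNIV"
      using True Y by (auto simp: image_iff)
    moreover have "inj (\<lambda>x::'a. (x, 0::'a))" by (auto simp: inj_on_def)
    ultimately show ?thesis using True Y by (simp add: card_image)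
  next
    case X: False
    have "{u::'a \<times> 'a. fst u * X + snd u * Y = 0} = (\<lambda>y. (- (y * Y) / X, y)) ` UNIV"
    proof (intro set_eqI iffI)
      fix u :: "'a \<times> 'a" assume "u \<in> {u. fst u * X + snd u * Y = 0}"
      then have "fst u * X = - (snd u * Y)" by (simp add: eq_neg_iff_add_eq_0)
      then have "fst u = - (snd u * Y) / X" using X by (simp add: field_simps)
      then show "u \<in> (\<lambda>y. (- (y * Y) / X, y)) ` UNIV"
        by (intro image_eqI[of _ _ "snd u"]) (cases u, auto)
    next
      fix u :: "'a \<times> 'a" assume "u \<in> (\<lambda>y. (- (y * Y) / X, y)) ` UNIV"
      then show "u \<in> {u. fst u * X + snd u * Y = 0}" using X by auto
    qed
    moreover have "inj (\<lambda>y::'a. (- (y * Y) / X, y))" by (auto simp: inj_on_def)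
    ultimately show ?thesis using X by (simp add: card_image)
  qed
qed

context ham
begin

definition sa :: "nat set \<Rightarrow> (nat \<Rightarrow> 'a) \<Rightarrow> 'a" where "sa S f = (\<Sum>j\<in>S. f j * H!j!0)"
definition sb :: "nat set \<Rightarrow> (nat \<Rightarrow> 'a) \<Rightarrow> 'a" where "sb S f = (\<Sum>j\<in>S. f j * H!j!1)"
definition NS :: "nat set \<Rightarrow> nat" where
  "NS S = card {f \<in> Pi\<^sub>E S (\<lambda>_. UNIV - {0::'a}). sa S f = 0 \<and> sb S f = 0}"

lemma lin: "(\<Sum>j\<in>S. f j * dot u j) = fst u * sa S f + snd u * sb S f"
  by (simp add: dot_def sa_def sb_def sum_distrib_left sum.distrib algebra_simps)

lemma dc:
  assumes "finite S"
  shows "(\<Sum>u\<in>UNIV. G S (dot u) 0) = CARD('a) * CARD('a) * NS S + CARD('a) * (card (Pi\<^sub>E S (\<lambda>_. UNIV - {0::'a})) - NS S)"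
proof -
  let ?V = "Pi\<^sub>E S (\<lambda>_. UNIV - {0::'a})"
  let ?P = "\<lambda>u f. fst u * sa S f + snd u * sb S f = 0"
  let ?q = "CARD('a)"
  have fV: "finite ?V" by (rule finite_PiE) (use assms in auto)
  have "(\<Sum>u\<in>UNIV. G S (dot u) 0) = (\<Sum>u\<in>UNIV. \<Sum>f\<in>?V. if ?P u f then 1 else 0)"
  proof (rule sum.cong)
    fix u :: "'a \<times> 'a"
    have "G S (dot u) 0 = card {f \<in> ?V. ?P u f}" unfolding G_def lin ..
    also have "\<dots> = (\<Sum>f\<in>?V. if ?P u f then 1 else 0)"
      using fV by (simp add: sum.inter_filter[symmetric])
    finally show "G S (dot u) 0 = (\<Sum>f\<in>?V. if ?P u f then 1 else 0)" .
  qed simp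
  also have "\<dots> = (\<Sum>f\<in>?V. \<Sum>u\<in>UNIV. if ?P u f then 1 else 0)" by (rule sum.swap)
  also have "\<dots> = (\<Sum>f\<in>?V. if sa S f = 0 \<and> sb S f = 0 then ?q * ?q else ?q)"
  proof (rule sum.cong)
    fix f
    have "(\<Sum>u\<in>UNIV. if ?P u f then 1 else 0) = card {u. ?P u f}"
      by (simp add: sum.inter_filter[symmetric])
    also have "\<dots> = (if sa S f = 0 \<and> sb S f = 0 then ?q * ?q else ?q)" by (rule lincount)
    finally show "(\<Sum>u\<in>UNIV. if ?P u f then 1 else 0) = (if sa S f = 0 \<and> sb S f = 0 then ?q * ?q else ?q)" .
  qed simp
  also have "\<dots> = (\<Sum>f\<in>?V \<inter> {f. sa S f = 0 \<and> sb S f = 0}. ?q * ?q) + (\<Sum>f\<in>?V \<inter> - {f. sa S f = 0 \<and> sb S f = 0}. ?q)"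
    using fV by (rule sum.If_cases)
  also have "\<dots> = ?q * ?q * NS S + ?q * (card ?V - NS S)"
  proof -
    have e1: "?V \<inter> {f. sa S f = 0 \<and> sb S f = 0} = {f \<in> ?V. sa S f = 0 \<and> sb S f = 0}" by auto
    have e2: "?V \<inter> - {f. sa S f = 0 \<and> sb S f = 0} = ?V - {f \<in> ?V. sa S f = 0 \<and> sb S f = 0}" by auto
    have "card (?V - {f \<in> ?V. sa S f = 0 \<and> sb S f = 0}) = card ?V - NS S"
      unfolding NS_def using fV by (subst card_Diff_subset) auto
    then show ?thesis unfolding e1 e2 NS_def by simp
  qed
  finally show ?thesis .
qed

end


context ham
begin

lemma q2: "CARD('a) \<ge> 2"
proof -
  have "card {0::'a, 1} \<le> CARD('a)" by (rule card_mono) auto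
  then show ?thesis by simp
qed

lemma lhs:
  assumes S: "S \<subseteq> {..<length H}"
  defines "U1 \<equiv> {u. u \<noteq> (0, 0) \<and> (\<exists>j\<in>S. dot u j = 0)}"
  defines "U0 \<equiv> {u. u \<noteq> (0, 0) \<and> \<not> (\<exists>j\<in>S. dot u j = 0)}"
  shows "(\<Sum>u\<in>UNIV. G S (dot u) 0) = (CARD('a) - 1) ^ card S
     + card U1 * ((CARD('a) - 1) * fst (Zp CARD('a) (card S - 1)))
     + card U0 * fst (Zp CARD('a) (card S))"
proof -
  let ?q = "CARD('a)"
  let ?g = "\<lambda>u. G S (dot u) 0"
  have fS: "finite S" using S finite_subset by blast
  have gf: "?g u = (?q - 1) ^ card {j\<in>S. dot u j = 0} * fst (Zp ?q (card {j\<in>S. dot u j \<noteq> 0}))" for u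
    using G_formula[OF fS, of "dot u" 0] by simp
  have UN: "(UNIV :: ('a \<times> 'a) set) = insert (0, 0) (U1 \<union> U0)" unfolding U1_def U0_def by auto
  have "(\<Sum>u\<in>UNIV. ?g u) = ?g (0, 0) + (\<Sum>u\<in>U1 \<union> U0. ?g u)"
    unfolding UN by (rule sum.insert) (auto simp: U1_def U0_def)
  also have "(\<Sum>u\<in>U1 \<union> U0. ?g u) = (\<Sum>u\<in>U1. ?g u) + (\<Sum>u\<in>U0. ?g u)"
    by (rule sum.union_disjoint) (auto simp: U1_def U0_def)
  also have "?g (0, 0) = (?q - 1) ^ card S"
  proof -
    have A: "{j\<in>S. dot (0, 0) j = 0} = S" by (auto simp: dot_def)
    have B: "{j\<in>S. dot (0, 0) j \<noteq> 0} = {}" by (auto simp: dot_def)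
    show ?thesis using gf[of "(0, 0)"] unfolding A B by simp
  qed
  also have "(\<Sum>u\<in>U1. ?g u) = (\<Sum>u\<in>U1. (?q - 1) * fst (Zp ?q (card S - 1)))"
  proof (rule sum.cong)
    fix u assume "u \<in> U1"
    then obtain j0 where u0: "u \<noteq> (0, 0)" and j0: "j0 \<in> S" "dot u j0 = 0" unfolding U1_def by auto
    have A: "{j\<in>S. dot u j = 0} = {j0}"
    proof (intro set_eqI iffI)
      fix j assume "j \<in> {j\<in>S. dot u j = 0}"
      then have "j = j0" using uniq_eq[OF u0, of j j0] j0 S by auto
      then show "j \<in> {j0}" by simp
    qed (use j0 in auto)
    have B: "{j\<in>S. dot u j \<noteq> 0} = S - {j0}"
    proof (intro set_eqI iffI)
      fix j assume "j \<in> S - {j0}"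
      then have "dot u j \<noteq> 0" using uniq_eq[OF u0, of j j0] j0 S by auto
      then show "j \<in> {j\<in>S. dot u j \<noteq> 0}" using \<open>j \<in> S - {j0}\<close> by simp
    qed (use j0 in auto)
    show "?g u = (?q - 1) * fst (Zp ?q (card S - 1))" using gf[of u] j0 fS unfolding A B by simp
  qed simp
  also have "(\<Sum>u\<in>U0. ?g u) = (\<Sum>u\<in>U0. fst (Zp ?q (card S)))"
  proof (rule sum.cong)
    fix u assume "u \<in> U0"
    then have A: "{j\<in>S. dot u j = 0} = {}" and B: "{j\<in>S. dot u j \<noteq> 0} = S" unfolding U0_def by auto
    show "?g u = fst (Zp ?q (card S))" using gf[of u] unfolding A B by simp
  qed simp
  finally show ?thesis by simp
qed

lemma cardU:
  assumes S: "S \<subseteq> {..<length H}"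
  shows "card {u. u \<noteq> (0, 0) \<and> (\<exists>j\<in>S. dot u j = 0)} + card {u. u \<noteq> (0::'a, 0::'a) \<and> \<not> (\<exists>j\<in>S. dot u j = 0)}
     = CARD('a) * CARD('a) - 1"
proof -
  have "card {u. u \<noteq> (0, 0) \<and> (\<exists>j\<in>S. dot u j = 0)} + card {u. u \<noteq> (0::'a, 0::'a) \<and> \<not> (\<exists>j\<in>S. dot u j = 0)}
      = card ({u. u \<noteq> (0, 0) \<and> (\<exists>j\<in>S. dot u j = 0)} \<union> {u. u \<noteq> (0::'a, 0::'a) \<and> \<not> (\<exists>j\<in>S. dot u j = 0)})"
    by (rule card_Un_disjoint[symmetric]) auto
  also have "({u. u \<noteq> (0, 0) \<and> (\<exists>j\<in>S. dot u j = 0)} \<union> {u. u \<noteq> (0::'a, 0::'a) \<and> \<not> (\<exists>j\<in>S. dot u j = 0)}) = UNIV - {(0, 0)}"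
    by auto
  also have "card (UNIV - {(0::'a, 0::'a)}) = CARD('a) * CARD('a) - 1"
    by (simp add: card_Diff_singleton UNIV_Times_UNIV[symmetric] card_cartesian_product del: UNIV_Times_UNIV)
  finally show ?thesis .
qed

lemma NS_formula:
  assumes S: "S \<subseteq> {..<length H}"
  shows "int CARD('a) ^ 2 * int (NS S) = (int CARD('a) - 1) ^ card S
     + (-1) ^ card S * (int CARD('a) - 1) * (int CARD('a) + 1 - int (card S) * int CARD('a))"
proof -
  let ?q = "CARD('a)"
  define w where "w = card S"
  define Q where "Q = int ?q"
  define N where "N = int (NS S)"
  define c1 where "c1 = int (card {u. u \<noteq> (0, 0) \<and> (\<exists>j\<in>S. dot u j = 0)})"
  define c0 where "c0 = int (card {u. u \<noteq> (0::'a, 0::'a) \<and> \<not> (\<exists>j\<in>S. dot u j = 0)})"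
  define Z where "Z = int (fst (Zp ?q w))"
  define Z' where "Z' = int (fst (Zp ?q (w - 1)))"
  have fS: "finite S" using S finite_subset by blast
  have qq: "?q \<ge> 2" by (rule q2)
  let ?V = "Pi\<^sub>E S (\<lambda>_. UNIV - {0::'a})"
  have cV: "card ?V = (?q - 1) ^ w" unfolding w_def using fS by (simp add: card_PiE card_Diff_singleton)
  have NV: "NS S \<le> card ?V" unfolding NS_def
    by (rule card_mono) (auto intro!: finite_PiE fS)
  have c1v: "c1 = int w * (Q - 1)" unfolding c1_def w_def Q_def using U1_card[OF S] qq by (simp add: of_nat_diff)
  have c01: "c0 + c1 = Q * Q - 1"
  proof -
    have "int (card {u. u \<noteq> (0, 0) \<and> (\<exists>j\<in>S. dot u j = 0)} + card {u. u \<noteq> (0::'a, 0::'a) \<and> \<not> (\<exists>j\<in>S. dot u j = 0)})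
       = int (?q * ?q - 1)" using cardU[OF S] by (rule arg_cong)
    also have "\<dots> = Q * Q - 1" unfolding Q_def using qq by (simp add: of_nat_diff)
    finally show ?thesis unfolding c0_def c1_def by simp
  qed
  have E1: "int (?q * ?q * NS S + ?q * (card ?V - NS S)) = Q * Q * N + Q * ((Q - 1) ^ w - N)"
    unfolding Q_def N_def using NV cV qq by (simp add: of_nat_diff)
  have E2: "int ((?q - 1) ^ card S + card {u. u \<noteq> (0, 0) \<and> (\<exists>j\<in>S. dot u j = 0)} * ((?q - 1) * fst (Zp ?q (card S - 1)))
     + card {u. u \<noteq> (0::'a, 0::'a) \<and> \<not> (\<exists>j\<in>S. dot u j = 0)} * fst (Zp ?q (card S)))
     = (Q - 1) ^ w + c1 * ((Q - 1) * Z') + c0 * Z"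
    unfolding Q_def c1_def c0_def Z_def Z'_def w_def using qq by (simp add: of_nat_diff)
  have eq: "?q * ?q * NS S + ?q * (card ?V - NS S) = (?q - 1) ^ card S + card {u. u \<noteq> (0, 0) \<and> (\<exists>j\<in>S. dot u j = 0)} * ((?q - 1) * fst (Zp ?q (card S - 1)))
     + card {u. u \<noteq> (0::'a, 0::'a) \<and> \<not> (\<exists>j\<in>S. dot u j = 0)} * fst (Zp ?q (card S))"
    by (rule trans[OF sym[OF dc[OF fS]] lhs[OF S]])
  have main: "Q * Q * N + Q * ((Q - 1) ^ w - N) = (Q - 1) ^ w + c1 * ((Q - 1) * Z') + c0 * Z"
    unfolding E1[symmetric] E2[symmetric] using eq by (rule arg_cong)
  have ZZ: "Q * Z = (Q - 1) ^ w + (-1) ^ w * (Q - 1)" unfolding Q_def Z_def by (rule conjunct1[OF Zp_closed[OF qq]])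
  have ZZ': "Q * Z' = (Q - 1) ^ (w - 1) + (-1) ^ (w - 1) * (Q - 1)" unfolding Q_def Z'_def by (rule conjunct1[OF Zp_closed[OF qq]])
  have key: "(Q - 1) * (Q * Q * N) = (Q - 1) * ((Q - 1) ^ w + (-1) ^ w * (Q - 1) * (Q + 1 - int w * Q))"
  proof (cases w)
    case 0
    then have "c1 = 0" using c1v by simp
    then have "Q * Q * N + Q * (1 - N) = 1 + (Q * Q - 1) * Z" using main c01 0 by simp
    moreover have "Q * Z = Q * 1" using ZZ 0 by simp
    then have "Z = 1" using qq unfolding Q_def by simp
    ultimately have "Q * Q * N + Q * (1 - N) = Q * Q" by simp
    then have "Q * (Q * N + 1 - N) = Q * Q" by (simp add: algebra_simps)
    then have "Q * N + 1 - N = Q" using qq unfolding Q_def by simp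
    then have "(Q - 1) * N = (Q - 1) * 1" by (simp add: algebra_simps)
    then have "N = 1" using qq unfolding Q_def by simp
    then show ?thesis using 0 by (simp add: algebra_simps)
  next
    case (Suc v)
    have c0v: "c0 = Q * Q - 1 - int w * (Q - 1)" using c01 c1v by simp
    have "Q * (Q * Q * N + Q * ((Q - 1) ^ w - N)) = Q * ((Q - 1) ^ w + c1 * ((Q - 1) * Z') + c0 * Z)"
      using main by simp
    also have "\<dots> = Q * (Q - 1) ^ w + c1 * (Q - 1) * (Q * Z') + c0 * (Q * Z)" by (simp add: algebra_simps)
    also have "\<dots> = Q * (Q - 1) ^ w + int w * (Q - 1) * (Q - 1) * ((Q - 1) ^ v + (-1) ^ v * (Q - 1))
        + (Q * Q - 1 - int w * (Q - 1)) * ((Q - 1) * (Q - 1) ^ v - (-1) ^ v * (Q - 1))"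
      unfolding ZZ ZZ' c1v c0v using Suc by simp
    finally have "Q * (Q * Q * N + Q * ((Q - 1) ^ w - N)) = Q * (Q - 1) ^ w + int w * (Q - 1) * (Q - 1) * ((Q - 1) ^ v + (-1) ^ v * (Q - 1))
        + (Q * Q - 1 - int w * (Q - 1)) * ((Q - 1) * (Q - 1) ^ v - (-1) ^ v * (Q - 1))" .
    then show ?thesis using Suc by (simp add: algebra_simps)
  qed
  have "Q * Q * N = (Q - 1) ^ w + (-1) ^ w * (Q - 1) * (Q + 1 - int w * Q)"
    using key qq unfolding Q_def by simp
  then show ?thesis unfolding Q_def N_def w_def by (simp add: power2_eq_square)
qed

end



lemma all_less_2: "(\<forall>k<(2::nat). P k) \<longleftrightarrow> P 0 \<and> P 1"
  by (auto simp: less_2_cases_iff)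

context ham
begin

lemma sum_supp:
  fixes c h :: "nat \<Rightarrow> 'a"
  assumes S: "S \<subseteq> {..<length H}" and z: "\<And>j. j < length H \<Longrightarrow> j \<notin> S \<Longrightarrow> c j = 0"
  shows "(\<Sum>j<length H. c j * h j) = (\<Sum>j\<in>S. c j * h j)"
  by (rule sum.mono_neutral_right) (use S z in auto)

lemma fiber:
  assumes S: "S \<subseteq> {..<length H}"
  shows "card {c \<in> parity_code 2 H. {i. i < length c \<and> c!i \<noteq> 0} = S} = NS S"
proof -
  let ?V = "Pi\<^sub>E S (\<lambda>_. UNIV - {0::'a})"
  let ?A = "{c \<in> parity_code 2 H. {i. i < length c \<and> c!i \<noteq> 0} = S}"
  let ?B = "{f \<in> ?V. sa S f = 0 \<and> sb S f = 0}"
  let ?fr = "\<lambda>f. map (\<lambda>j. if j \<in> S then f j else 0) [0..<length H]"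
  let ?to = "\<lambda>c. restrict (\<lambda>j. c!j) S"
  have "bij_betw ?fr ?B ?A"
  proof (rule bij_betw_byWitness[where f' = ?to])
    show "\<forall>f\<in>?B. ?to (?fr f) = f"
    proof
      fix f assume f: "f \<in> ?B"
      show "?to (?fr f) = f"
      proof
        fix j show "?to (?fr f) j = f j"
        proof (cases "j \<in> S")
          case True
          then have "j < length H" using S by auto
          then show ?thesis using True by simp
        next
          case False
          have fV: "f \<in> ?V" using f by (simp only: mem_Collect_eq)
          have "f j = undefined" by (rule PiE_arb[OF fV False])
          moreover have "?to (?fr f) j = undefined" using False by simp
          ultimately show ?thesis by simp
        qed
      qed
    qed
    show "\<forall>c\<in>?A. ?fr (?to c) = c"
    proof
      fix c assume c: "c \<in> ?A"
      then have lc: "length c = length H" by (simp add: parity_code_def)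
      show "?fr (?to c) = c"
      proof (rule nth_equalityI)
        show "length (?fr (?to c)) = length c" using lc by simp
        fix i assume "i < length (?fr (?to c))"
        then have i: "i < length H" by simp
        show "?fr (?to c) ! i = c ! i"
        proof (cases "i \<in> S")
          case True then show ?thesis using i by simp
        next
          case False
          then have "c ! i = 0" using c i lc by auto
          then show ?thesis using i False by simp
        qed
      qed
    qed
    show "?fr ` ?B \<subseteq> ?A"
    proof
      fix c assume "c \<in> ?fr ` ?B"
      then obtain f where f: "f \<in> ?B" and c: "c = ?fr f" by blast
      have lc: "length c = length H" using c by simp
      have cn: "c ! j = (if j \<in> S then f j else 0)" if "j < length H" for j
        using c that by simp
      have supp: "{i. i < length c \<and> c!i \<noteq> 0} = S"
      proof (intro set_eqI iffI)
        fix i assume "i \<in> {i. i < length c \<and> c!i \<noteq> 0}"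
        then show "i \<in> S" using cn lc by (auto split: if_splits)
      next
        fix i assume i: "i \<in> S"
        then have "i < length H" using S by auto
        moreover have "f i \<noteq> 0" using f i by (auto simp: PiE_iff)
        ultimately show "i \<in> {i. i < length c \<and> c!i \<noteq> 0}" using cn lc i by auto
      qed
      have "(\<Sum>j<length H. c!j * H!j!k) = (\<Sum>j\<in>S. c!j * H!j!k)" for k
        by (rule sum_supp[OF S]) (use cn in auto)
      also have "(\<Sum>j\<in>S. c!j * H!j!k) = (\<Sum>j\<in>S. f j * H!j!k)" for k
        by (rule sum.cong) (use cn S in auto)
      finally have "(\<Sum>j<length H. c!j * H!j!k) = (\<Sum>j\<in>S. f j * H!j!k)" for k .
      then have "\<forall>k<2. (\<Sum>j<length H. c!j * H!j!k) = 0"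
        using f unfolding all_less_2 sa_def sb_def by simp
      then show "c \<in> ?A" using lc supp by (simp add: parity_code_def)
    qed
    show "?to ` ?A \<subseteq> ?B"
    proof
      fix f assume "f \<in> ?to ` ?A"
      then obtain c where c: "c \<in> ?A" and f: "f = ?to c" by blast
      have lc: "length c = length H" using c by (simp add: parity_code_def)
      have par: "\<forall>k<2. (\<Sum>j<length H. c!j * H!j!k) = 0" using c by (simp add: parity_code_def)
      have z: "c ! j = 0" if "j < length H" "j \<notin> S" for j using c that lc by auto
      have "(\<Sum>j<length H. c!j * H!j!k) = (\<Sum>j\<in>S. c!j * H!j!k)" for k
        by (rule sum_supp[OF S]) (use z in auto)
      also have "(\<Sum>j\<in>S. c!j * H!j!k) = (\<Sum>j\<in>S. f j * H!j!k)" for k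
        by (rule sum.cong) (use f in auto)
      finally have e: "(\<Sum>j<length H. c!j * H!j!k) = (\<Sum>j\<in>S. f j * H!j!k)" for k .
      have "sa S f = 0" "sb S f = 0" using par unfolding all_less_2 sa_def sb_def e by auto
      moreover have "f \<in> ?V"
      proof -
        have "c ! j \<noteq> 0" if "j \<in> S" for j using c that by auto
        then show ?thesis using f by auto
      qed
      ultimately show "f \<in> ?B" by simp
    qed
  qed
  then have "card ?B = card ?A" by (rule bij_betw_same_card)
  then show ?thesis unfolding NS_def by simp
qed

lemma finite_code: "finite (parity_code 2 H)"
proof -
  have "parity_code 2 H \<subseteq> {xs. set xs \<subseteq> UNIV \<and> length xs = length H}"
    by (auto simp: parity_code_def)
  moreover have "finite {xs. set xs \<subseteq> (UNIV :: 'a set) \<and> length xs = length H}"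
    by (rule finite_lists_length_eq) simp
  ultimately show ?thesis by (rule finite_subset)
qed

lemma wc_sum:
  "weight_count (parity_code 2 H) w = (\<Sum>S\<in>{S. S \<subseteq> {..<length H} \<and> card S = w}. NS S)"
proof -
  let ?C = "parity_code 2 H"
  let ?SS = "{S. S \<subseteq> {..<length H} \<and> card S = w}"
  let ?F = "\<lambda>S. {c \<in> ?C. {i. i < length c \<and> c!i \<noteq> 0} = S}"
  have "{c \<in> ?C. hweight c = w} = (\<Union>S\<in>?SS. ?F S)"
  proof (intro set_eqI iffI)
    fix c assume c: "c \<in> {c \<in> ?C. hweight c = w}"
    then have "length c = length H" by (simp add: parity_code_def)
    then have "{i. i < length c \<and> c!i \<noteq> 0} \<in> ?SS" using c by (auto simp: hweight_def)
    then show "c \<in> (\<Union>S\<in>?SS. ?F S)" using c by blast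
  next
    fix c assume "c \<in> (\<Union>S\<in>?SS. ?F S)"
    then show "c \<in> {c \<in> ?C. hweight c = w}" by (auto simp: hweight_def)
  qed
  then have "weight_count ?C w = card (\<Union>S\<in>?SS. ?F S)" by (simp add: weight_count_def)
  also have "\<dots> = (\<Sum>S\<in>?SS. card (?F S))"
    by (rule card_UN_disjoint) (auto intro: finite_subset[OF _ finite_code])
  also have "\<dots> = (\<Sum>S\<in>?SS. NS S)" by (rule sum.cong) (auto intro: fiber)
  finally show ?thesis .
qed

lemma wc_formula:
  "int CARD('a) ^ 2 * int (weight_count (parity_code 2 H) w) = int (length H choose w) * Ef (int CARD('a)) w"
proof -
  let ?SS = "{S. S \<subseteq> {..<length H} \<and> card S = w}"
  have "int CARD('a) ^ 2 * int (weight_count (parity_code 2 H) w) = (\<Sum>S\<in>?SS. int CARD('a) ^ 2 * int (NS S))"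
    unfolding wc_sum by (simp add: sum_distrib_left)
  also have "\<dots> = (\<Sum>S\<in>?SS. Ef (int CARD('a)) w)"
    by (rule sum.cong) (auto simp: Ef_def NS_formula)
  also have "\<dots> = int (card ?SS) * Ef (int CARD('a)) w" by simp
  also have "card ?SS = length H choose w" using n_subsets[of "{..<length H}" w] by simp
  finally show ?thesis .
qed

end

theorem mainTheorem8:
  fixes H :: "'a::{finite,field} list list"
  assumes "card (UNIV :: 'a set) \<ge> 9"
    and "is_hamming_pcm 2 H"
  shows "log_concave_code (length H) (parity_code 2 H)"
proof -
  interpret ham H by unfold_locales (rule assms(2))
  have q: "CARD('a) \<ge> 9" using assms(1) by simp
  have AE: "\<And>w. int CARD('a) ^ 2 * int (weight_count (parity_code 2 H) w)
      = int ((CARD('a) + 1) choose w) * Ef (int CARD('a)) w"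
    using wc_formula len by simp
  show ?thesis using final_arith[OF q AE] unfolding log_concave_code_def nonzero_weight_distr_def len .
qed

end
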